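(* For all $k,m\in\mathbf N$, $$\sum_{i=1}^{k-1}(-1)^{k-1-i}\sum_{d\mid m}\alpha_i(d)=\alpha_k(m)+(-1)^k\alpha_1(m).$$
   Context: For $k,m\in\mathbf N=\{1,2,\dots\}$, $\alpha_k(m)$ is the number of $k$-tuples $(m_1,\dots,m_k)$ of integers $m_i\ge2$ with $m_1m_2\cdots m_k=m$. The inner sum is over positive divisors $d$ of $m$. *)

theory Defs
  imports Main
begin

definition alpha :: "nat \<Rightarrow> nat \<Rightarrow> nat" where
  "alpha k m = card {xs :: nat list. length xs = k \<and> (\<forall>x\<in>set xs. 2 \<le> x) \<and> prod_list xs = m}"

end

theory Submission
  imports Defs
begin

lemma dvd_pl: "(x::nat) \<in> set xs \<Longrightarrow> x dvd prod_list xs"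
  by (induction xs) auto

definition A :: "nat \<Rightarrow> nat \<Rightarrow> nat list set" where
  "A k m = {xs :: nat list. length xs = k \<and> (\<forall>x\<in>set xs. 2 \<le> x) \<and> prod_list xs = m}"

lemma A_fin:
  assumes "m \<ge> 1" shows "finite (A k m)"
proof -
  have "A k m \<subseteq> {xs. set xs \<subseteq> {..m} \<and> length xs = k}"
  proof
    fix xs assume "xs \<in> A k m"
    hence h: "prod_list xs = m" "\<forall>x\<in>set xs. 2 \<le> x" by (auto simp: A_def)
    have "\<forall>x\<in>set xs. x \<le> m"
    proof
      fix x assume "x \<in> set xs"
      hence "x dvd m" using h(1) by (metis dvd_pl)
      thus "x \<le> m" using assms by (simp add: dvd_imp_le)
    qed
    thus "xs \<in> {xs. set xs \<subseteq> {..m} \<and> length xs = k}" using \<open>xs \<in> A k m\<close> by (auto simp: A_def)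
  qed
  moreover have "finite {xs. set xs \<subseteq> {..m} \<and> length xs = k}"
    by (rule finite_lists_length_eq) simp
  ultimately show ?thesis by (rule finite_subset)
qed

lemma A_Suc:
  assumes "m \<ge> 1"
  shows "A (Suc i) m = (\<Union>x\<in>{x. x dvd m \<and> 2 \<le> x}. (Cons x) ` A i (m div x))"
proof (intro set_eqI iffI)
  fix xs assume "xs \<in> A (Suc i) m"
  then obtain x ys where xs: "xs = x # ys" and "length ys = i" "2 \<le> x" "\<forall>y\<in>set ys. 2 \<le> y"
     "x * prod_list ys = m"
    by (cases xs) (auto simp: A_def)
  moreover have "prod_list ys = m div x" using \<open>x * prod_list ys = m\<close> \<open>2 \<le> x\<close> by auto
  moreover have "x dvd m" using \<open>x * prod_list ys = m\<close> by (metis dvd_triv_left)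
  ultimately show "xs \<in> (\<Union>x\<in>{x. x dvd m \<and> 2 \<le> x}. (Cons x) ` A i (m div x))"
    by (intro UN_I[of x]) (auto simp: A_def)
next
  fix xs assume "xs \<in> (\<Union>x\<in>{x. x dvd m \<and> 2 \<le> x}. (Cons x) ` A i (m div x))"
  then obtain x ys where xs: "xs = x # ys" "x dvd m" "2 \<le> x" "ys \<in> A i (m div x)" by auto
  thus "xs \<in> A (Suc i) m" by (auto simp: A_def)
qed

lemma alpha_A: "alpha k m = card (A k m)" by (simp add: alpha_def A_def)

lemma alpha_Suc:
  assumes "m \<ge> 1"
  shows "alpha (Suc i) m = (\<Sum>d | d dvd m \<and> d < m. alpha i d)"
proof -
  have fin: "finite {x. x dvd m \<and> 2 \<le> (x::nat)}"
    by (rule finite_subset[of _ "{..m}"]) (use assms in \<open>auto dest: dvd_imp_le\<close>)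
  have "alpha (Suc i) m = card (\<Union>x\<in>{x. x dvd m \<and> 2 \<le> x}. (Cons x) ` A i (m div x))"
    using A_Suc[OF assms] by (simp add: alpha_A)
  also have "\<dots> = (\<Sum>x\<in>{x. x dvd m \<and> 2 \<le> x}. card ((Cons x) ` A i (m div x)))"
  proof (rule card_UN_disjoint[OF fin])
    show "\<forall>x\<in>{x. x dvd m \<and> 2 \<le> x}. finite ((#) x ` A i (m div x))"
      proof (intro ballI finite_imageI A_fin)
      fix x assume "x \<in> {x. x dvd m \<and> 2 \<le> x}"
      then obtain q where "m = x * q" "2 \<le> x" by (auto elim!: dvdE)
      thus "1 \<le> m div x" using assms by (cases q) auto
    qed
  qed auto
  also have "\<dots> = (\<Sum>x\<in>{x. x dvd m \<and> 2 \<le> x}. alpha i (m div x))"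
    by (simp add: card_image alpha_A)
  also have "\<dots> = (\<Sum>d | d dvd m \<and> d < m. alpha i d)"
  proof (rule sum.reindex_bij_witness[of _ "\<lambda>d. m div d" "\<lambda>x. m div x"])
    fix x assume x: "x \<in> {x. x dvd m \<and> 2 \<le> x}"
    from x show "m div (m div x) = x" using assms by (auto elim!: dvdE)
    from x show "m div x \<in> {d. d dvd m \<and> d < m}" using assms
      by (auto elim!: dvdE simp: dvd_def)
    show "alpha i (m div x) = alpha i (m div x)" by simp
  next
    fix d assume d: "d \<in> {d. d dvd m \<and> d < m}"
    hence "d > 0" using assms by (auto intro: Nat.gr0I)
    from d show "m div (m div d) = d" by auto
    from d show "m div d \<in> {x. x dvd m \<and> 2 \<le> x}"
      using \<open>d>0\<close> by (auto elim!: dvdE simp: dvd_def)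
  qed
  finally show ?thesis .
qed

lemma sum_div:
  assumes "m \<ge> 1"
  shows "(\<Sum>d | d dvd m. int (alpha i d)) = int (alpha i m) + int (alpha (Suc i) m)"
proof -
  have fin: "finite {d. d dvd m}" using assms by simp
  have "{d. d dvd m} = insert m {d. d dvd m \<and> d < m}" using assms
    by (auto dest: dvd_imp_le)
  hence "(\<Sum>d | d dvd m. int (alpha i d)) = int (alpha i m) + (\<Sum>d | d dvd m \<and> d < m. int (alpha i d))"
    using fin by (simp add: sum.insert)
  also have "\<dots> = int (alpha i m) + int (alpha (Suc i) m)"
    by (simp add: alpha_Suc[OF assms])
  finally show ?thesis .
qed

lemma telescope:
  fixes g :: "nat \<Rightarrow> int"
  shows "(\<Sum>i=1..n. (-1::int) ^ (n - i) * (g i + g (Suc i))) = g (Suc n) + (-1) ^ Suc n * g 1"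
proof (induction n)
  case 0 then show ?case by simp
next
  case (Suc n)
  have "(\<Sum>i=1..Suc n. (-1::int) ^ (Suc n - i) * (g i + g (Suc i)))
      = (g (Suc n) + g (Suc (Suc n))) + (\<Sum>i=1..n. (-1::int) ^ (Suc n - i) * (g i + g (Suc i)))"
    by simp
  also have "(\<Sum>i=1..n. (-1::int) ^ (Suc n - i) * (g i + g (Suc i)))
     = - (\<Sum>i=1..n. (-1::int) ^ (n - i) * (g i + g (Suc i)))"
    by (subst sum_negf[symmetric], rule sum.cong) (auto simp: Suc_diff_le)
  finally show ?case using Suc by simp
qed

theorem lemma4p2:
  fixes k m :: nat
  assumes "1 \<le> k" and "1 \<le> m"
  shows "(\<Sum>i=1..k-1. (-1::int) ^ (k - 1 - i) * (\<Sum>d | d dvd m. int (alpha i d)))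
         = int (alpha k m) + (-1) ^ k * int (alpha 1 m)"
proof -
  obtain n where k: "k = Suc n" using assms(1) by (cases k) auto
  show ?thesis
    using telescope[of n "\<lambda>i. int (alpha i m)"] by (simp add: k sum_div[OF assms(2)])
qed

end
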